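(* Let $\mathbb{F}$ be a finite field, $M\in\mathbb{F}^{m\times n}$ with $\operatorname{rank}(M)=r-1$. Let $C\in\mathbb{F}^{m\times r}$, $F\in\mathbb{F}^{r\times n}$ with $M=CF$, and let $C_0\in\mathbb{F}^{m\times(r-1)}$, $F_0\in\mathbb{F}^{(r-1)\times n}$ with $M=C_0F_0$. Then there exists $G\in\mathbb{F}^{(r-1)\times r}$ with $C=C_0G$, or there exists $H\in\mathbb{F}^{r\times(r-1)}$ with $F=HF_0$. *)

theory Defs
  imports "Jordan_Normal_Form.DL_Rank"
begin

end

theory Submission
  imports Defs
begin

lemma (in vec_space) span_eq_if_dim:
  assumes A: "finite A" "A \<subseteq> carrier_vec n" and B: "finite B" "B \<subseteq> carrier_vec n"
    and sub: "span A \<subseteq> span B"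
    and d: "vectorspace.dim class_ring (vs (span B)) \<le> vectorspace.dim class_ring (vs (span A))"
  shows "span B \<subseteq> span A"
proof -
  have AV: "A \<subseteq> carrier V" "B \<subseteq> carrier V" using A B by auto
  have sA: "subspace class_ring (span A) V" by (rule span_is_subspace[OF A(2)])
  have sB: "subspace class_ring (span B) V" by (rule span_is_subspace[OF B(2)])
  have mA: "submodule class_ring (span A) V" using sA unfolding subspace_def by blast
  have mB: "submodule class_ring (span B) V" using sB unfolding subspace_def by blast
  have vsA: "vectorspace class_ring (vs (span A))" using sA subspace_is_vs by blast
  have vsB: "vectorspace class_ring (vs (span B))" using sB subspace_is_vs by blast
  have fdA: "vectorspace.fin_dim class_ring (vs (span A))" using fin_dim_span A by auto
  have fdB: "vectorspace.fin_dim class_ring (vs (span B))" using fin_dim_span B by auto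
  obtain b where fb: "finite b" and bb: "vectorspace.basis class_ring (vs (span A)) b"
    using vectorspace.finite_basis_exists[OF vsA fdA] by blast
  have bA: "b \<subseteq> span A" and lib: "LinearCombinations.module.lin_indpt class_ring (vs (span A)) b"
    using bb unfolding vectorspace.basis_def[OF vsA] by auto
  have cb: "vectorspace.dim class_ring (vs (span A)) = card b"
    using vectorspace.dim_basis[OF vsA fb bb] .
  have liV: "lin_indpt b" using span_li_not_depend(2)[OF bA mA] lib by argo
  have bB: "b \<subseteq> span B" using bA sub by auto
  have liB: "LinearCombinations.module.lin_indpt class_ring (vs (span B)) b" using span_li_not_depend(2)[OF bB mB] liV by argo
  have basB: "vectorspace.basis class_ring (vs (span B)) b"
    by (rule vectorspace.dim_li_is_basis[OF vsB fdB fb]) (use bB liB d cb in auto)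
  then have "LinearCombinations.module.span class_ring (vs (span B)) b = span B"
    unfolding vectorspace.basis_def[OF vsB] by auto
  then have "span b = span B" using span_li_not_depend(1)[OF bB mB] by simp
  moreover have "span b \<subseteq> span A" using span_is_subset[OF bA mA] .
  ultimately show ?thesis by simp
qed

lemma (in vec_space) non_distinct_low_rank':
assumes "A \<in> carrier_mat n nc"
and "\<not> distinct (cols A)"
shows "rank A < nc"
proof -
  obtain S where "maximal S (\<lambda>T. T \<subseteq> set (cols A) \<and> lin_indpt T)"
    using maximal_exists[of "(\<lambda>T. T \<subseteq> set (cols A) \<and> lin_indpt T)" "card (set (cols A))" "{}"]
    by (meson List.finite_set card_mono empty_iff empty_subsetI finite_lin_indpt2 rev_finite_subset)
  then have "card S \<le> card (set (cols A))" by (simp add: card_mono maximal_def)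
  then have "card S < nc"
    using assms(1) cols_length card_length \<open>\<not> distinct (cols A)\<close> card_distinct carrier_matD(2) nat_less_le
    by (metis dual_order.antisym dual_order.trans)
  then show ?thesis
    using rank_card_indpt[OF \<open>A \<in> carrier_mat n nc\<close> \<open>maximal S (\<lambda>T. T \<subseteq> set (cols A) \<and> lin_indpt T)\<close>]
    by simp
qed

lemma (in vec_space) full_rank_inj:
  assumes C: "C \<in> carrier_mat n nc" and r: "rank C = nc" and v: "v \<in> carrier_vec nc"
    and Cv: "C *\<^sub>v v = 0\<^sub>v n"
  shows "v = 0\<^sub>v nc"
proof (rule ccontr)
  assume nz: "v \<noteq> 0\<^sub>v nc"
  have d: "distinct (cols C)" using non_distinct_low_rank'[OF C] r by fastforce
  have "lin_indpt (set (cols C))" using full_rank_lin_indpt[OF C r d] .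
  moreover have "lin_dep (set (cols C))" using lin_depI[OF C v nz Cv d] .
  ultimately show False by simp
qed

lemma (in vec_space) factor_through:
  assumes A: "A \<in> carrier_mat n l" and B: "B \<in> carrier_mat n k"
    and sub: "set (cols B) \<subseteq> span (set (cols A))"
  shows "\<exists>G \<in> carrier_mat l k. B = A * G"
proof -
  have ex: "\<exists>x. x \<in> carrier_vec l \<and> A *\<^sub>v x = col B j" if j: "j < k" for j
  proof -
    have "col B j \<in> set (cols B)" using B j by (simp add: cols_def)
    hence "col B j \<in> col_space A" using sub unfolding col_space_def by auto
    then show ?thesis using col_space_eq[OF A] A by auto
  qed
  then obtain g where g: "\<And>j. j < k \<Longrightarrow> g j \<in> carrier_vec l \<and> A *\<^sub>v g j = col B j" by metis
  define G where "G = mat l k (\<lambda>(i,j). g j $ i)"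
  have G: "G \<in> carrier_mat l k" by (simp add: G_def)
  have "B = A * G"
  proof (rule eq_matI)
    show "dim_row B = dim_row (A * G)" "dim_col B = dim_col (A * G)" using A B G by auto
    fix i j assume i: "i < dim_row (A*G)" and j: "j < dim_col (A*G)"
    have i': "i < n" and j': "j < k" using i j A G by auto
    have cG: "col G j = g j" using g[OF j'] j' unfolding G_def by (auto intro!: eq_vecI)
    have "(A * G) $$ (i, j) = col (A * G) j $ i" using i j by simp
    also have "\<dots> = (A *\<^sub>v col G j) $ i" using col_mult2[OF A G j'] by simp
    also have "\<dots> = col B j $ i" using cG g[OF j'] by simp
    also have "\<dots> = B $$ (i, j)" using B i' j' by simp
    finally show "B $$ (i, j) = (A * G) $$ (i, j)" by simp
  qed
  with G show ?thesis by blast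
qed

lemma (in vec_space) span_cols_mult:
  assumes A: "A \<in> carrier_mat n l" and B: "B \<in> carrier_mat l k"
  shows "span (set (cols (A * B))) \<subseteq> span (set (cols A))"
proof -
  have AV0: "set (cols A) \<subseteq> carrier_vec n" using cols_dim A by (metis carrier_matD(1))
  have AV: "set (cols A) \<subseteq> carrier V" using AV0 by simp
  have m: "submodule class_ring (span (set (cols A))) V" using span_is_submodule[OF AV0] .
  have "set (cols (A * B)) \<subseteq> span (set (cols A))"
  proof
    fix c assume "c \<in> set (cols (A * B))"
    then obtain j where j: "j < k" and c: "c = col (A * B) j" using A B by (auto simp: cols_def)
    have "c = A *\<^sub>v col B j" using c col_mult2[OF A B j] by simp
    moreover have "col B j \<in> carrier_vec l" using B j by auto
    ultimately have "c \<in> col_space A" using col_space_eq[OF A] A by auto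
    then show "c \<in> span (set (cols A))" unfolding col_space_def .
  qed
  then show ?thesis using span_is_subset[OF _ m] by blast
qed


theorem lemma9:
  fixes M C F C0 F0 :: "'a :: {field, finite} mat"
    and m n r :: nat
  assumes "r \<ge> 1"
    and "M \<in> carrier_mat m n"
    and "vec_space.rank m M = r - 1"
    and "C \<in> carrier_mat m r" and "F \<in> carrier_mat r n" and "M = C * F"
    and "C0 \<in> carrier_mat m (r - 1)" and "F0 \<in> carrier_mat (r - 1) n" and "M = C0 * F0"
  shows "(\<exists>G \<in> carrier_mat (r - 1) r. C = C0 * G) \<or> (\<exists>H \<in> carrier_mat r (r - 1). F = H * F0)"
proof -
  interpret vs: vec_space "TYPE('a)" m .
  note Mc = assms(2) and rM = assms(3) and Cc = assms(4) and Fc = assms(5) and MCF = assms(6)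
    and C0c = assms(7) and F0c = assms(8) and MCF0 = assms(9)
  have cM: "set (cols M) \<subseteq> carrier_vec m" using cols_dim Mc by (metis carrier_matD(1))
  have cC: "set (cols C) \<subseteq> carrier_vec m" using cols_dim Cc by (metis carrier_matD(1))
  have cC0: "set (cols C0) \<subseteq> carrier_vec m" using cols_dim C0c by (metis carrier_matD(1))
  have h0: "vs.span (set (cols M)) \<subseteq> vs.span (set (cols C0))"
    using vs.span_cols_mult[OF C0c F0c] MCF0 by simp
  have h1: "vs.span (set (cols M)) \<subseteq> vs.span (set (cols C))"
    using vs.span_cols_mult[OF Cc Fc] MCF by simp
  have rC0: "vs.rank C0 \<le> r - 1" using vs.rank_le_nc[OF C0c] .
  have rC: "vs.rank C \<le> r" using vs.rank_le_nc[OF Cc] .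
  have e0: "vs.span (set (cols C0)) \<subseteq> vs.span (set (cols M))"
    by (rule vs.span_eq_if_dim[OF _ cM _ cC0 h0]) (use rC0 rM in \<open>auto simp: vs.rank_def\<close>)
  have ownC: "set (cols C) \<subseteq> vs.span (set (cols C))" using vs.in_own_span cC by auto
  have ownC0: "set (cols C0) \<subseteq> vs.span (set (cols C0))" using vs.in_own_span cC0 by auto
  show ?thesis
  proof (cases "vs.rank C \<le> r - 1")
    case True
    have e1: "vs.span (set (cols C)) \<subseteq> vs.span (set (cols M))"
      by (rule vs.span_eq_if_dim[OF _ cM _ cC h1]) (use True rM in \<open>auto simp: vs.rank_def\<close>)
    have "set (cols C) \<subseteq> vs.span (set (cols C0))" using ownC e1 h0 by blast
    from vs.factor_through[OF C0c Cc this] show ?thesis by blast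
  next
    case False
    then have rCr: "vs.rank C = r" using rC by simp
    have "set (cols C0) \<subseteq> vs.span (set (cols C))" using ownC0 e0 h1 by blast
    from vs.factor_through[OF Cc C0c this] obtain H where Hc: "H \<in> carrier_mat r (r - 1)"
      and CH: "C0 = C * H" by blast
    have HF0: "H * F0 \<in> carrier_mat r n" using Hc F0c by simp
    have eq: "C * F = C * (H * F0)"
      using MCF MCF0 CH assoc_mult_mat[OF Cc Hc F0c] by simp
    have "F = H * F0"
    proof (rule eq_matI)
      show "dim_row F = dim_row (H * F0)" "dim_col F = dim_col (H * F0)" using Fc HF0 by auto
      fix i j assume i: "i < dim_row (H * F0)" and j: "j < dim_col (H * F0)"
      have i': "i < r" and j': "j < n" using i j HF0 by auto
      have v1: "col F j \<in> carrier_vec r" using Fc j' by auto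
      have v2: "col (H * F0) j \<in> carrier_vec r" using HF0 j' by auto
      have "C *\<^sub>v col F j = C *\<^sub>v col (H * F0) j"
        using col_mult2[OF Cc Fc j'] col_mult2[OF Cc HF0 j'] eq by simp
      then have "C *\<^sub>v (col F j - col (H * F0) j) = 0\<^sub>v m"
        using mult_minus_distrib_mat_vec[OF Cc v1 v2] Cc by auto
      then have "col F j - col (H * F0) j = 0\<^sub>v r"
        using vs.full_rank_inj[OF Cc rCr] v1 v2 by auto
      then have "(col F j - col (H * F0) j) $ i = 0" using i' by simp
      then have "col F j $ i = col (H * F0) j $ i" using v1 v2 i' index_minus_vec(1)[of i "col (H * F0) j" "col F j"] Hc by auto
      then show "F $$ (i, j) = (H * F0) $$ (i, j)" using Fc HF0 i' j' Hc F0c by simp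
    qed
    with Hc show ?thesis by blast
  qed
qed

end
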